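(* Let $\Sigma$ be a set of basic identities in an algebraic language $\mathcal L$ whose set of constant symbols is $C$, and suppose $\Sigma$ is consistent. Then for every cardinal $\kappa>|C|$, $\Sigma$ has a model of cardinality $\kappa$.
   Context: An $\mathcal L$-term is basic if it contains at most one nonnullary function symbol (so it is a variable, a constant symbol, or $F(u_1,\dots,u_m)$ with each $u_i$ a variable or constant symbol); an identity $s\approx t$ is basic if $s,t$ are basic. For a set $X$ of variables, the weak closure $\overline{\Sigma}$ of $\Sigma$ in the variables $X$ is the smallest set of basic identities containing $\Sigma$ such that: (i) $t\approx t\in\overline\Sigma$ for every basic term $t$ with variables from $X$; (ii) if $s\approx t\in\overline\Sigma$ then $t\approx s\in\overline\Sigma$; (iii) if $r\approx s, s\approx t\in\overline\Sigma$ then $r\approx t\in\overline\Sigma$; (iv) if $s\approx t\in\overline\Sigma$ and $\gamma\colon X\to X\cup C$ is any function, then $s[\gamma]\approx t[\gamma]\in\overline\Sigma$, where $s[\gamma]$ replaces each variable $x$ by $\gamma(x)$; (v) if $t$ is a basic term and $c\approx d\in\overline\Sigma$ for $c,d\in C$, then $t\approx t'\in\overline\Sigma$, where $t'$ is obtained from $t$ by replacing one occurrence of $c$ by $d$. Write $\Sigma\vdash_X\varphi$ if $\varphi\in\overline\Sigma$. $X$ is large enough if it contains at least two variables, $|X|$ is at least the arity of every function symbol occurring in $\Sigma$, and $|X|$ is at least the number of distinct variables occurring in any identity of $\Sigma$. $\Sigma$ is inconsistent if $\Sigma\vdash_X x\approx y$ for some distinct $x,y\in X$ with $X$ large enough,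 and consistent otherwise. *)

theory Defs
  imports Main "HOL-Library.Equipollence"
begin

datatype ('f, 'c) trm = V nat | Cn 'c | Fn 'f "('f, 'c) trm list"

fun vars :: "('f, 'c) trm \<Rightarrow> nat set" where
  "vars (V x) = {x}"
| "vars (Cn c) = {}"
| "vars (Fn f us) = \<Union> (set (map vars us))"

fun funs :: "('f, 'c) trm \<Rightarrow> 'f set" where
  "funs (V x) = {}"
| "funs (Cn c) = {}"
| "funs (Fn f us) = insert f (\<Union> (set (map funs us)))"

fun subst :: "(nat \<Rightarrow> ('f, 'c) trm) \<Rightarrow> ('f, 'c) trm \<Rightarrow> ('f, 'c) trm" where
  "subst \<gamma> (V x) = \<gamma> x"
| "subst \<gamma> (Cn c) = Cn c"
| "subst \<gamma> (Fn f us) = Fn f (map (subst \<gamma>) us)"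

definition atom_term :: "'c set \<Rightarrow> ('f, 'c) trm \<Rightarrow> bool" where
  "atom_term C u \<longleftrightarrow> (\<exists>x. u = V x) \<or> (\<exists>c\<in>C. u = Cn c)"

definition basic_term :: "'f set \<Rightarrow> ('f \<Rightarrow> nat) \<Rightarrow> 'c set \<Rightarrow> ('f, 'c) trm \<Rightarrow> bool" where
  "basic_term Fs ar C t \<longleftrightarrow> atom_term C t \<or>
     (\<exists>f us. t = Fn f us \<and> f \<in> Fs \<and> length us = ar f \<and> (\<forall>u\<in>set us. atom_term C u))"

definition basic_identity :: "'f set \<Rightarrow> ('f \<Rightarrow> nat) \<Rightarrow> 'c set \<Rightarrow> ('f, 'c) trm \<times> ('f, 'c) trm \<Rightarrow> bool" where
  "basic_identity Fs ar C e \<longleftrightarrow> basic_term Fs ar C (fst e) \<and> basic_term Fs ar C (snd e)"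

definition replace_one :: "'c \<Rightarrow> 'c \<Rightarrow> ('f, 'c) trm \<Rightarrow> ('f, 'c) trm \<Rightarrow> bool" where
  "replace_one c d t t' \<longleftrightarrow> (t = Cn c \<and> t' = Cn d) \<or>
     (\<exists>f us i. t = Fn f us \<and> i < length us \<and> us ! i = Cn c \<and> t' = Fn f (us[i := Cn d]))"

inductive wc :: "'f set \<Rightarrow> ('f \<Rightarrow> nat) \<Rightarrow> 'c set \<Rightarrow> (('f, 'c) trm \<times> ('f, 'c) trm) set
    \<Rightarrow> nat set \<Rightarrow> ('f, 'c) trm \<times> ('f, 'c) trm \<Rightarrow> bool"
  for Fs ar C \<Sigma> X where
  wc_ax: "e \<in> \<Sigma> \<Longrightarrow> wc Fs ar C \<Sigma> X e"
| wc_refl: "basic_term Fs ar C t \<Longrightarrow> vars t \<subseteq> X \<Longrightarrow> wc Fs ar C \<Sigma> X (t, t)"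
| wc_sym: "wc Fs ar C \<Sigma> X (s, t) \<Longrightarrow> wc Fs ar C \<Sigma> X (t, s)"
| wc_trans: "wc Fs ar C \<Sigma> X (r, s) \<Longrightarrow> wc Fs ar C \<Sigma> X (s, t) \<Longrightarrow> wc Fs ar C \<Sigma> X (r, t)"
| wc_subst: "wc Fs ar C \<Sigma> X (s, t) \<Longrightarrow> (\<forall>x\<in>X. \<gamma> x \<in> V ` X \<union> Cn ` C) \<Longrightarrow>
     (\<forall>x. x \<notin> X \<longrightarrow> \<gamma> x = V x) \<Longrightarrow> wc Fs ar C \<Sigma> X (subst \<gamma> s, subst \<gamma> t)"
| wc_repl: "basic_term Fs ar C t \<Longrightarrow> c \<in> C \<Longrightarrow> d \<in> C \<Longrightarrow> wc Fs ar C \<Sigma> X (Cn c, Cn d) \<Longrightarrow>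
     replace_one c d t t' \<Longrightarrow> wc Fs ar C \<Sigma> X (t, t')"

definition large_enough :: "('f \<Rightarrow> nat) \<Rightarrow> (('f, 'c) trm \<times> ('f, 'c) trm) set \<Rightarrow> nat set \<Rightarrow> bool" where
  "large_enough ar \<Sigma> X \<longleftrightarrow>
     (\<exists>x\<in>X. \<exists>y\<in>X. x \<noteq> y) \<and>
     (\<forall>e\<in>\<Sigma>. \<forall>f\<in>funs (fst e) \<union> funs (snd e). {..<ar f} \<lesssim> X) \<and>
     (\<forall>e\<in>\<Sigma>. vars (fst e) \<union> vars (snd e) \<lesssim> X)"

definition inconsistent :: "'f set \<Rightarrow> ('f \<Rightarrow> nat) \<Rightarrow> 'c set \<Rightarrow> (('f, 'c) trm \<times> ('f, 'c) trm) set \<Rightarrow> bool" where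
  "inconsistent Fs ar C \<Sigma> \<longleftrightarrow>
     (\<exists>X x y. large_enough ar \<Sigma> X \<and> x \<in> X \<and> y \<in> X \<and> x \<noteq> y \<and> wc Fs ar C \<Sigma> X (V x, V y))"

definition consistent :: "'f set \<Rightarrow> ('f \<Rightarrow> nat) \<Rightarrow> 'c set \<Rightarrow> (('f, 'c) trm \<times> ('f, 'c) trm) set \<Rightarrow> bool" where
  "consistent Fs ar C \<Sigma> \<longleftrightarrow> \<not> inconsistent Fs ar C \<Sigma>"

fun eval :: "('c \<Rightarrow> 'k) \<Rightarrow> ('f \<Rightarrow> 'k list \<Rightarrow> 'k) \<Rightarrow> (nat \<Rightarrow> 'k) \<Rightarrow> ('f, 'c) trm \<Rightarrow> 'k" where
  "eval cI fI a (V x) = a x"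
| "eval cI fI a (Cn c) = cI c"
| "eval cI fI a (Fn f us) = fI f (map (eval cI fI a) us)"

definition is_structure :: "'f set \<Rightarrow> ('f \<Rightarrow> nat) \<Rightarrow> 'c set \<Rightarrow> 'k set \<Rightarrow> ('c \<Rightarrow> 'k) \<Rightarrow> ('f \<Rightarrow> 'k list \<Rightarrow> 'k) \<Rightarrow> bool" where
  "is_structure Fs ar C M cI fI \<longleftrightarrow> M \<noteq> {} \<and> (\<forall>c\<in>C. cI c \<in> M) \<and>
     (\<forall>f\<in>Fs. \<forall>xs. length xs = ar f \<and> set xs \<subseteq> M \<longrightarrow> fI f xs \<in> M)"

definition is_model :: "'f set \<Rightarrow> ('f \<Rightarrow> nat) \<Rightarrow> 'c set \<Rightarrow> (('f, 'c) trm \<times> ('f, 'c) trm) set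
    \<Rightarrow> 'k set \<Rightarrow> ('c \<Rightarrow> 'k) \<Rightarrow> ('f \<Rightarrow> 'k list \<Rightarrow> 'k) \<Rightarrow> bool" where
  "is_model Fs ar C \<Sigma> M cI fI \<longleftrightarrow> is_structure Fs ar C M cI fI \<and>
     (\<forall>e\<in>\<Sigma>. \<forall>a. (\<forall>x. a x \<in> M) \<longrightarrow> eval cI fI a (fst e) = eval cI fI a (snd e))"

end

theory Submission
  imports Defs
begin

lemma finite_vars: "finite (vars t)" by (induction t) auto
lemma subst_id: "(\<forall>x\<in>vars t. \<gamma> x = V x) \<Longrightarrow> subst \<gamma> t = t"
  by (induction t) (auto intro: map_idI)
lemma eval_subst: "eval cI fI a (subst \<gamma> t) = eval cI fI (\<lambda>x. eval cI fI a (\<gamma> x)) t"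
proof (induction t)
  case (Fn f us)
  have "map (eval cI fI a \<circ> subst \<gamma>) us = map (eval cI fI (\<lambda>x. eval cI fI a (\<gamma> x))) us"
    by (rule map_cong) (use Fn in auto)
  then show ?case by (simp only: subst.simps eval.simps map_map)
qed auto
lemma vars_subst: "vars (subst \<gamma> t) = (\<Union>x\<in>vars t. vars (\<gamma> x))"
  by (induction t) auto

fun av :: "('c \<Rightarrow> 'k) \<Rightarrow> (nat \<Rightarrow> 'k) \<Rightarrow> ('f, 'c) trm \<Rightarrow> 'k" where
  "av cI \<beta> (V x) = \<beta> x"
| "av cI \<beta> (Cn c) = cI c"
| "av cI \<beta> (Fn f us) = undefined"

lemma eval_atom: "atom_term C u \<Longrightarrow> eval cI fI \<beta> u = av cI \<beta> u"
  unfolding atom_term_def by auto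

definition faithT :: "('c \<Rightarrow> 'k) \<Rightarrow> 'c set \<Rightarrow> (nat \<Rightarrow> 'k) \<Rightarrow> ('f, 'c) trm \<Rightarrow> bool" where
  "faithT cI C \<beta> t \<longleftrightarrow> (\<forall>x\<in>vars t. \<beta> x \<notin> cI ` C \<and> (\<forall>y\<in>vars t. \<beta> x = \<beta> y \<longrightarrow> x = y))"

locale L =
  fixes Fs :: "'f set" and ar :: "'f \<Rightarrow> nat" and C :: "'c set"
    and \<Sigma> :: "(('f, 'c) trm \<times> ('f, 'c) trm) set"
    and K :: "'k set" and g :: "'c \<Rightarrow> 'k" and m0 :: 'k
  assumes cons: "\<And>x y. x \<noteq> y \<Longrightarrow> \<not> wc Fs ar C \<Sigma> UNIV (V x, V y)"
    and ginj: "inj_on g C" and gK: "g ` C \<subseteq> K" and m0K: "m0 \<in> K"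
begin

abbreviation W where "W e \<equiv> wc Fs ar C \<Sigma> UNIV e"

lemma W_sym: "W (s, t) \<Longrightarrow> W (t, s)" by (rule wc_sym)
lemma W_trans: "W (r, s) \<Longrightarrow> W (s, t) \<Longrightarrow> W (r, t)" by (rule wc_trans)

lemma L_VC: "\<not> W (V x, Cn c)"
proof
  assume h: "W (V x, Cn c)"
  obtain y :: nat where y: "y \<noteq> x" by (metis n_not_Suc_n)
  let ?\<gamma> = "V(x := V y)"
  have "W (subst ?\<gamma> (V x), subst ?\<gamma> (Cn c))"
    by (rule wc_subst[OF h]) auto
  then have "W (V y, Cn c)" by simp
  with h have "W (V x, V y)" by (metis W_sym W_trans)
  with cons[OF y[symmetric]] show False by simp
qed

lemma L_FV: assumes "x \<notin> vars (Fn f w)" shows "\<not> W (Fn f w, V x)"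
proof
  assume h: "W (Fn f w, V x)"
  have "finite (insert x (vars (Fn f w)))" using finite_vars by blast
  then obtain y where y: "y \<notin> insert x (vars (Fn f w))" using ex_new_if_finite[of "insert x (vars (Fn f w))"] by auto
  let ?\<gamma> = "V(x := V y)"
  have "W (subst ?\<gamma> (Fn f w), subst ?\<gamma> (V x))"
    by (rule wc_subst[OF h]) auto
  moreover have "subst ?\<gamma> (Fn f w) = Fn f w"
    by (rule subst_id) (use assms in auto)
  ultimately have "W (Fn f w, V y)" by simp
  with h have "W (V x, V y)" by (metis W_sym W_trans)
  with cons y show False by auto
qed

definition rep where "rep c = (SOME d. d \<in> C \<and> W (Cn c, Cn d))"
definition cI where "cI c = g (rep c)"

lemma rep: assumes "c \<in> C" shows "rep c \<in> C \<and> W (Cn c, Cn (rep c))"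
proof -
  have "W (Cn c, Cn c)" by (rule wc_refl) (use assms in \<open>auto simp: basic_term_def atom_term_def\<close>)
  then show ?thesis unfolding rep_def using assms by (rule_tac someI[of _ c]) auto
qed

lemma cIK: "c \<in> C \<Longrightarrow> cI c \<in> K" using rep gK unfolding cI_def by blast

lemma L_CC: assumes "c \<in> C" "d \<in> C" shows "W (Cn c, Cn d) \<longleftrightarrow> cI c = cI d"
proof
  assume h: "W (Cn c, Cn d)"
  have "(\<lambda>e. e \<in> C \<and> W (Cn c, Cn e)) = (\<lambda>e. e \<in> C \<and> W (Cn d, Cn e))"
  proof (rule ext)
    fix e show "(e \<in> C \<and> W (Cn c, Cn e)) = (e \<in> C \<and> W (Cn d, Cn e))"
      using h W_sym[OF h] W_trans[of "Cn c" "Cn d" "Cn e"] W_trans[of "Cn d" "Cn c" "Cn e"] by blast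
  qed
  then show "cI c = cI d" unfolding cI_def rep_def by simp
next
  assume "cI c = cI d"
  then have "rep c = rep d" using ginj rep assms unfolding cI_def inj_on_def by blast
  then show "W (Cn c, Cn d)" using rep assms by (metis W_sym W_trans)
qed

lemma atom_eq: assumes "atom_term C p" "atom_term C q" "W (p, q)"
  shows "av cI a p = av cI a q"
proof -
  consider x y where "p = V x" "q = V y" | x c where "p = V x" "q = Cn c" "c \<in> C"
    | x c where "q = V x" "p = Cn c" "c \<in> C" | c d where "p = Cn c" "q = Cn d" "c \<in> C" "d \<in> C"
    using assms(1,2) unfolding atom_term_def by blast
  then show ?thesis
  proof cases
    case 1 then show ?thesis using assms(3) cons by (cases "x = y") auto
  next
    case 2 then show ?thesis using assms(3) L_VC by auto
  next
    case 3 then show ?thesis using assms(3) L_VC W_sym by blast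
  next
    case 4 then show ?thesis using assms(3) L_CC by auto
  qed
qed

lemma repl_chain:
  assumes b: "basic_term Fs ar C (Fn f w1)" and l: "length w2 = length w1"
    and h: "\<forall>i<length w1. w1!i = w2!i \<or> (\<exists>c d. w1!i = Cn c \<and> w2!i = Cn d \<and> c \<in> C \<and> d \<in> C \<and> W (Cn c, Cn d))"
  shows "W (Fn f w1, Fn f w2)"
proof -
  have at2: "\<forall>u\<in>set w2. atom_term C u"
  proof
    fix u assume "u \<in> set w2"
    then obtain i where i: "i < length w1" "u = w2!i" using l by (metis in_set_conv_nth)
    have "atom_term C (w1!i)" using b i unfolding basic_term_def atom_term_def by auto
    then show "atom_term C u" using h i unfolding atom_term_def by fastforce
  qed
  have fs: "f \<in> Fs" "length w1 = ar f" and at1: "\<forall>u\<in>set w1. atom_term C u"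
    using b unfolding basic_term_def atom_term_def by auto
  have "k \<le> length w1 \<Longrightarrow> W (Fn f w1, Fn f (take k w2 @ drop k w1))" for k
  proof (induction k)
    case 0
    show ?case by (simp, rule wc_refl[OF b]) simp
  next
    case (Suc k)
    let ?us = "take k w2 @ drop k w1"
    have kl: "k < length w1" using Suc by simp
    have IH: "W (Fn f w1, Fn f ?us)" using Suc by simp
    have us_k: "?us ! k = w1 ! k" using kl l by (simp add: nth_append)
    have dk: "drop k w1 = w1!k # drop (Suc k) w1" using kl by (simp add: Cons_nth_drop_Suc)
    have upd: "?us[k := w2!k] = take (Suc k) w2 @ drop (Suc k) w1"
      using kl l by (subst dk) (simp add: list_update_append take_Suc_conv_app_nth)
    show ?case
    proof (cases "w1!k = w2!k")
      case True
      then have "take (Suc k) w2 @ drop (Suc k) w1 = ?us" using upd us_k by (metis list_update_id)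
      then show ?thesis using IH by simp
    next
      case False
      then obtain c d where cd: "w1!k = Cn c" "w2!k = Cn d" "c \<in> C" "d \<in> C" "W (Cn c, Cn d)"
        using h kl by blast
      have bus: "basic_term Fs ar C (Fn f ?us)"
        unfolding basic_term_def using fs at1 at2 l kl
        by (auto dest: in_set_takeD in_set_dropD)
      have "replace_one c d (Fn f ?us) (Fn f (?us[k := Cn d]))"
        unfolding replace_one_def using us_k cd kl l by auto
      then have "W (Fn f ?us, Fn f (?us[k := Cn d]))"
        by (rule wc_repl[OF bus cd(3) cd(4) cd(5)])
      then show ?thesis using IH upd cd by (metis W_trans)
    qed
  qed
  from this[of "length w1"] show ?thesis using l by simp
qed

definition R :: "'f \<Rightarrow> 'k list \<Rightarrow> ('f, 'c) trm list \<times> (nat \<Rightarrow> 'k) \<times> ('f, 'c) trm \<Rightarrow> bool" where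
  "R f xs r \<longleftrightarrow> (case r of (w, \<beta>, p) \<Rightarrow> basic_term Fs ar C (Fn f w) \<and> map (av cI \<beta>) w = xs \<and>
     (\<forall>x. \<beta> x \<in> K) \<and> faithT cI C \<beta> (Fn f w) \<and> atom_term C p \<and> W (Fn f w, p))"

definition fI where
  "fI f xs = (if \<exists>r. R f xs r then (case SOME r. R f xs r of (w, \<beta>, p) \<Rightarrow> av cI \<beta> p) else m0)"

lemma nth_av: "map (av cI a) w = xs \<Longrightarrow> i < length w \<Longrightarrow> xs ! i = av cI a (w ! i)"
  by auto

lemma basicFn: "basic_term Fs ar C (Fn f w) \<Longrightarrow> f \<in> Fs \<and> length w = ar f \<and> (\<forall>u\<in>set w. atom_term C u)"
  unfolding basic_term_def atom_term_def by auto

lemma atom_cases: "atom_term C u \<Longrightarrow> (\<And>x. u = V x \<Longrightarrow> P) \<Longrightarrow> (\<And>c. u = Cn c \<Longrightarrow> c \<in> C \<Longrightarrow> P) \<Longrightarrow> P"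
  unfolding atom_term_def by blast

lemma Inv:
  assumes r: "R f xs (w0, \<beta>0, p0)" and b: "basic_term Fs ar C (Fn f w)"
    and m: "map (av cI a) w = xs" and fa: "faithT cI C a (Fn f w)" and aK: "\<forall>x. a x \<in> K"
  shows "\<exists>q. atom_term C q \<and> W (Fn f w, q) \<and> av cI a q = av cI \<beta>0 p0"
proof -
  have b0: "basic_term Fs ar C (Fn f w0)" and m0: "map (av cI \<beta>0) w0 = xs"
    and fa0: "faithT cI C \<beta>0 (Fn f w0)" and ap0: "atom_term C p0" and W0: "W (Fn f w0, p0)"
    using r unfolding R_def by auto
  from basicFn[OF b0] have fs: "f \<in> Fs" "length w0 = ar f" and at0: "\<forall>u\<in>set w0. atom_term C u" by auto
  from basicFn[OF b] have len: "length w = ar f" and at: "\<forall>u\<in>set w. atom_term C u" by auto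
  have lw: "length w0 = length w" using fs len by simp
  define V0 where "V0 = vars (Fn f w0)"
  define J where "J x = (SOME i. i < length w0 \<and> w0 ! i = V x)" for x
  define \<rho> where "\<rho> x = (if x \<in> V0 then w ! J x else V x)" for x
  have V0i: "\<exists>i<length w0. w0 ! i = V x" if xv: "x \<in> V0" for x
  proof -
    obtain u where u: "u \<in> set w0" "x \<in> vars u" using xv unfolding V0_def by auto
    have "atom_term C u" using at0 u by blast
    then have "u = V x" using u by (elim atom_cases) auto
    then show ?thesis using u by (metis in_set_conv_nth)
  qed
  have atw: "i < length w \<Longrightarrow> atom_term C (w ! i)" for i using at by auto
  have key: "subst \<rho> (V x) = w ! i" if i: "i < length w0" "w0 ! i = V x" for i x
  proof -
    have "V x \<in> set w0" using i by (metis nth_mem)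
    then have xV: "x \<in> V0" unfolding V0_def by force
    have J: "J x < length w0 \<and> w0 ! J x = V x" unfolding J_def using i by (rule_tac someI[of _ i]) auto
    have e1: "av cI a (w ! i) = \<beta>0 x" using nth_av[OF m, of i] nth_av[OF m0, of i] i lw by simp
    have e2: "av cI a (w ! J x) = \<beta>0 x" using nth_av[OF m, of "J x"] nth_av[OF m0, of "J x"] J lw by simp
    have nc: "\<beta>0 x \<notin> cI ` C" using fa0 xV unfolding faithT_def V0_def by blast
    have wi: "w ! i \<in> set w" "w ! J x \<in> set w" using i J lw by auto
    have ai: "atom_term C (w ! i)" "atom_term C (w ! J x)" using atw i J lw by auto
    obtain y where y: "w ! i = V y"
      using ai(1) e1 nc by (elim atom_cases) force+
    obtain y' where y': "w ! J x = V y'"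
      using ai(2) e2 nc by (elim atom_cases) force+
    have "V y \<in> set w" "V y' \<in> set w" using wi y y' by auto
    then have "y \<in> vars (Fn f w)" "y' \<in> vars (Fn f w)" by force+
    moreover have "a y = a y'" using e1 e2 y y' by simp
    ultimately have "y = y'" using fa unfolding faithT_def by blast
    then show ?thesis using y y' xV unfolding \<rho>_def by simp
  qed
  have each: "atom_term C (subst \<rho> (w0 ! i)) \<and> (subst \<rho> (w0 ! i) = w ! i \<or>
      (\<exists>c d. subst \<rho> (w0 ! i) = Cn c \<and> w ! i = Cn d \<and> c \<in> C \<and> d \<in> C \<and> W (Cn c, Cn d)))"
    if i: "i < length w0" for i
  proof -
    have "atom_term C (w0 ! i)" using at0 i by auto
    then show ?thesis
    proof (rule atom_cases)
      fix x assume "w0 ! i = V x"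
      then show ?thesis using key[OF i] atw[of i] i lw by simp
    next
      fix c assume c: "w0 ! i = Cn c" "c \<in> C"
      have e: "av cI a (w ! i) = cI c" using nth_av[OF m, of i] nth_av[OF m0, of i] i lw c by simp
      have "atom_term C (w ! i)" using atw i lw by simp
      then obtain d where d: "w ! i = Cn d" "d \<in> C"
      proof (rule atom_cases)
        fix y assume y: "w ! i = V y"
        then have "V y \<in> set w" using i lw by (metis nth_mem)
        then have "y \<in> vars (Fn f w)" by force
        then have "a y \<notin> cI ` C" using fa unfolding faithT_def by blast
        then show thesis using e y c by simp
      qed
      then have "cI c = cI d" using e by simp
      then have "W (Cn c, Cn d)" using L_CC c d by simp
      then show ?thesis using c d by (auto simp: atom_term_def)
    qed
  qed
  have bw1: "basic_term Fs ar C (Fn f (map (subst \<rho>) w0))"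
    unfolding basic_term_def using fs each by (auto simp: in_set_conv_nth)
  have ch: "W (Fn f (map (subst \<rho>) w0), Fn f w)"
    by (rule repl_chain[OF bw1]) (use lw each in auto)
  have rng: "\<forall>x\<in>UNIV. \<rho> x \<in> V ` UNIV \<union> Cn ` C"
  proof
    fix x
    show "\<rho> x \<in> V ` UNIV \<union> Cn ` C"
    proof (cases "x \<in> V0")
      case True
      then obtain i where i: "i < length w0" "w0 ! i = V x" using V0i by blast
      have "\<rho> x = w ! i" using key[OF i] by simp
      then show ?thesis using atw[of i] i lw unfolding atom_term_def by auto
    qed (simp add: \<rho>_def)
  qed
  have "W (subst \<rho> (Fn f w0), subst \<rho> p0)" by (rule wc_subst[OF W0 rng]) simp
  then have Wq: "W (Fn f w, subst \<rho> p0)" using ch by (metis W_sym W_trans subst.simps(3))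
  show ?thesis
  using ap0 proof (rule atom_cases)
    fix x assume p0: "p0 = V x"
    have "x \<in> V0" using L_FV W0 p0 unfolding V0_def by blast
    then obtain i where i: "i < length w0" "w0 ! i = V x" using V0i by blast
    have "subst \<rho> p0 = w ! i" using key[OF i] p0 by simp
    moreover have "av cI a (w ! i) = av cI \<beta>0 p0"
      using nth_av[OF m, of i] nth_av[OF m0, of i] i lw p0 by simp
    ultimately show ?thesis using Wq atw[of i] i lw by metis
  next
    fix c assume "p0 = Cn c" "c \<in> C"
    then show ?thesis using Wq by (auto simp: atom_term_def)
  qed
qed

lemma R_some: assumes "\<exists>r. R f xs r"
  obtains w0 \<beta>0 p0 where "R f xs (w0, \<beta>0, p0)" "fI f xs = av cI \<beta>0 p0"
proof -
  obtain w0 \<beta>0 p0 where e: "(SOME r. R f xs r) = (w0, \<beta>0, p0)" by (metis prod_cases3)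
  have "R f xs (SOME r. R f xs r)" using assms by (rule someI_ex)
  then show ?thesis using that e assms unfolding fI_def by simp
qed

lemma E1:
  assumes b: "basic_term Fs ar C (Fn f w)" and fa: "faithT cI C a (Fn f w)" and aK: "\<forall>x. a x \<in> K"
    and p: "atom_term C p" "W (Fn f w, p)"
  shows "fI f (map (av cI a) w) = av cI a p"
proof -
  have "R f (map (av cI a) w) (w, a, p)" unfolding R_def using assms by auto
  then obtain w0 \<beta>0 p0 where r: "R f (map (av cI a) w) (w0, \<beta>0, p0)"
    and fv: "fI f (map (av cI a) w) = av cI \<beta>0 p0" by (metis R_some)
  obtain q where q: "atom_term C q" "W (Fn f w, q)" "av cI a q = av cI \<beta>0 p0"
    using Inv[OF r b refl fa aK] by blast
  have "W (p, q)" using p q by (metis W_sym W_trans)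
  then have "av cI a p = av cI a q" using atom_eq p q by blast
  then show ?thesis using fv q by simp
qed

lemma E2:
  assumes b: "basic_term Fs ar C (Fn f w)" and fa: "faithT cI C a (Fn f w)" and aK: "\<forall>x. a x \<in> K"
    and np: "\<not> (\<exists>p. atom_term C p \<and> W (Fn f w, p))"
  shows "fI f (map (av cI a) w) = m0"
proof (cases "\<exists>r. R f (map (av cI a) w) r")
  case True
  then obtain w0 \<beta>0 p0 where r: "R f (map (av cI a) w) (w0, \<beta>0, p0)" by (metis R_some)
  show ?thesis using Inv[OF r b refl fa aK] np by blast
qed (simp add: fI_def)

lemma eval_Fn: "basic_term Fs ar C (Fn f w) \<Longrightarrow> eval cI fI a (Fn f w) = fI f (map (av cI a) w)"
proof -
  assume b: "basic_term Fs ar C (Fn f w)"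
  have "map (eval cI fI a) w = map (av cI a) w"
  proof (rule map_cong)
    fix u assume "u \<in> set w"
    then have "atom_term C u" using basicFn[OF b] by blast
    then show "eval cI fI a u = av cI a u" by (rule eval_atom)
  qed simp
  then show ?thesis by (metis eval.simps(3))
qed

lemma main:
  assumes bs: "basic_term Fs ar C s" and bt: "basic_term Fs ar C t"
    and fs: "faithT cI C a s" and ft: "faithT cI C a t" and aK: "\<forall>x. a x \<in> K" and W: "W (s, t)"
  shows "eval cI fI a s = eval cI fI a t"
proof -
  have bc: "atom_term C u \<or> (\<exists>f w. u = Fn f w \<and> basic_term Fs ar C (Fn f w))" if "basic_term Fs ar C u" for u
    using that unfolding basic_term_def by auto
  show ?thesis
  proof (cases "atom_term C s")
    case sa: True
    show ?thesis
    proof (cases "atom_term C t")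
      case True
      then show ?thesis using sa atom_eq W eval_atom by metis
    next
      case False
      then obtain g v where t: "t = Fn g v" "basic_term Fs ar C (Fn g v)" using bc[OF bt] by blast
      have "fI g (map (av cI a) v) = av cI a s" using E1[OF t(2) _ aK sa] ft t W W_sym by blast
      moreover have "eval cI fI a s = av cI a s" by (rule eval_atom[OF sa])
      ultimately show ?thesis using eval_Fn[OF t(2)] t by simp
    qed
  next
    case sn: False
    then obtain f w where s: "s = Fn f w" "basic_term Fs ar C (Fn f w)" using bc[OF bs] by blast
    show ?thesis
    proof (cases "atom_term C t")
      case ta: True
      have "fI f (map (av cI a) w) = av cI a t" using E1[OF s(2) _ aK ta] fs s W by blast
      moreover have "eval cI fI a t = av cI a t" by (rule eval_atom[OF ta])
      ultimately show ?thesis using eval_Fn[OF s(2)] s by simp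
    next
      case False
      then obtain g v where t: "t = Fn g v" "basic_term Fs ar C (Fn g v)" using bc[OF bt] by blast
      show ?thesis
      proof (cases "\<exists>p. atom_term C p \<and> W (s, p)")
        case True
        then obtain p where p: "atom_term C p" "W (s, p)" by blast
        have "W (t, p)" using p W by (metis W_sym W_trans)
        then show ?thesis using E1[OF s(2) _ aK p(1)] E1[OF t(2) _ aK p(1)] eval_Fn[OF s(2)] eval_Fn[OF t(2)]
          s t fs ft p by simp
      next
        case False
        then have "\<not> (\<exists>p. atom_term C p \<and> W (t, p))" using W by (metis W_trans)
        then show ?thesis using E2[OF s(2) _ aK] E2[OF t(2) _ aK] eval_Fn[OF s(2)] eval_Fn[OF t(2)]
          s t fs ft False by simp
      qed
    qed
  qed
qed

definition ga where
  "ga a x = (if a x \<in> cI ` C then Cn (SOME c. c \<in> C \<and> cI c = a x) else V (LEAST y. a y = a x))"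

lemma ga_range: "ga a x \<in> V ` UNIV \<union> Cn ` C"
proof (cases "a x \<in> cI ` C")
  case True
  then have "\<exists>c. c \<in> C \<and> cI c = a x" by auto
  then have "(SOME c. c \<in> C \<and> cI c = a x) \<in> C" by (metis (mono_tags, lifting) someI_ex)
  then show ?thesis using True unfolding ga_def by auto
qed (auto simp: ga_def)

lemma eval_ga: "eval cI fI a (ga a x) = a x"
proof (cases "a x \<in> cI ` C")
  case True
  then have "\<exists>c. c \<in> C \<and> cI c = a x" by auto
  then have "cI (SOME c. c \<in> C \<and> cI c = a x) = a x" by (metis (mono_tags, lifting) someI_ex)
  then show ?thesis using True unfolding ga_def by auto
next
  case False
  have "a (LEAST y. a y = a x) = a x" by (rule LeastI[of _ x]) simp
  then show ?thesis using False unfolding ga_def by auto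
qed

lemma vars_ga: "z \<in> vars (ga a x) \<Longrightarrow> a z \<notin> cI ` C \<and> z = (LEAST y. a y = a z)"
proof -
  assume z: "z \<in> vars (ga a x)"
  then have nc: "a x \<notin> cI ` C" and zd: "z = (LEAST y. a y = a x)" unfolding ga_def by (auto split: if_splits)
  have "a z = a x" unfolding zd by (rule LeastI[of _ x]) simp
  then show ?thesis using nc zd by simp
qed

lemma faith_ga: "faithT cI C a (subst (ga a) s)"
  unfolding faithT_def vars_subst using vars_ga by (metis UN_E)

lemma basic_ga: assumes "basic_term Fs ar C s" shows "basic_term Fs ar C (subst (ga a) s)"
proof -
  have at: "atom_term C u \<Longrightarrow> atom_term C (subst (ga a) u)" for u
    using ga_range[of a] unfolding atom_term_def by (auto simp: image_iff) fastforce
  show ?thesis using assms at unfolding basic_term_def by auto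
qed

lemma model: assumes "\<forall>e\<in>\<Sigma>. basic_identity Fs ar C e"
  shows "is_model Fs ar C \<Sigma> K cI fI"
  unfolding is_model_def is_structure_def
proof (intro conjI ballI allI impI)
  show "K \<noteq> {}" using m0K by auto
  show "cI c \<in> K" if "c \<in> C" for c using cIK that by simp
  show "fI f xs \<in> K" for f xs
  proof (cases "\<exists>r. R f xs r")
    case True
    then obtain w0 \<beta>0 p0 where r: "R f xs (w0, \<beta>0, p0)" and v: "fI f xs = av cI \<beta>0 p0" by (metis R_some)
    from r have "atom_term C p0" "\<forall>x. \<beta>0 x \<in> K" unfolding R_def by auto
    then show ?thesis using v cIK by (elim atom_cases) auto
  qed (simp add: fI_def m0K)
  fix e and a :: "nat \<Rightarrow> 'k" assume e: "e \<in> \<Sigma>" and aK: "\<forall>x. a x \<in> K"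
  obtain s t where st: "e = (s, t)" by fastforce
  have b: "basic_term Fs ar C s" "basic_term Fs ar C t" using assms e st unfolding basic_identity_def by auto
  have "W (s, t)" using e st wc_ax by simp
  then have Ws: "W (subst (ga a) s, subst (ga a) t)" by (rule wc_subst) (use ga_range in force)+
  have ev: "eval cI fI a (subst (ga a) u) = eval cI fI a u" for u
    by (simp add: eval_subst eval_ga)
  have "eval cI fI a (subst (ga a) s) = eval cI fI a (subst (ga a) t)"
    by (rule main[OF basic_ga[OF b(1)] basic_ga[OF b(2)] faith_ga faith_ga aK Ws])
  then show "eval cI fI a (fst e) = eval cI fI a (snd e)" using ev st by simp
qed

end

theorem corollary4p5:
  fixes Fs :: "'f set" and ar :: "'f \<Rightarrow> nat" and C :: "'c set"
    and \<Sigma> :: "(('f, 'c) trm \<times> ('f, 'c) trm) set" and K :: "'k set"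
  assumes "\<forall>f\<in>Fs. 0 < ar f"
    and "\<forall>e\<in>\<Sigma>. basic_identity Fs ar C e"
    and "consistent Fs ar C \<Sigma>"
    and "C \<prec> K"
  shows "\<exists>M cI fI. M \<approx> K \<and> is_model Fs ar C \<Sigma> (M :: 'k set) cI fI"
proof -
  from assms(4) have "C \<lesssim> K" unfolding lesspoll_def by blast
  then obtain g where g: "inj_on g C" "g ` C \<subseteq> K" unfolding lepoll_def by blast
  have "K \<noteq> {}"
  proof
    assume "K = {}"
    then have "C = {}" using g by auto
    then show False using assms(4) \<open>K = {}\<close> unfolding lesspoll_def by (simp add: eqpoll_refl)
  qed
  then obtain m0 where m0: "m0 \<in> K" by blast
  have le: "large_enough ar \<Sigma> (UNIV :: nat set)"
    unfolding large_enough_def by (auto intro!: subset_imp_lepoll)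
  have cons: "x \<noteq> y \<Longrightarrow> \<not> wc Fs ar C \<Sigma> UNIV (V x, V y)" for x y
    using assms(3) le unfolding consistent_def inconsistent_def by blast
  interpret L Fs ar C \<Sigma> K g m0
    using cons g m0 by unfold_locales auto
  show ?thesis using model[OF assms(2)] eqpoll_refl by blast
qed

end
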